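(* Let $G=(V,E)$ be a finite simple graph with $n$ vertices, $e$ edges, minimum degree $\delta \geq 1$, maximum degree $\Delta$, and independence number $\beta$. Then each of the following five inequalities holds, and in each of them equality holds if and only if $G$ is a regular balanced bipartite graph: [1] $$Z_1(G) \leq (n - \beta) \Delta^2 + \frac{e^2}{2 \beta} + \frac{\beta \Delta^3}{2 \delta};$$ [2] $$F(G) \geq (n - \beta) \delta^3 + \frac{\delta (2 \beta^2 \delta^2 - e^2)}{\beta};$$ [3] $$F(G) \geq (n - \beta) \delta^3 + \frac{\delta}{\beta} \left( 2 \beta \left(\beta \delta^2 + \frac{e^2}{n - \beta}\right) - e^2 - 2 \beta (n - \beta) \Delta^2\right);$$ [4] $$Inv(G) \geq \frac{n - \beta}{\Delta} + \frac{2 \beta^2 \delta^2 - e^2}{\beta \Delta^3};$$ [5] $$Inv(G) \geq \frac{n - \beta}{\Delta} + \frac{1}{\beta \Delta^3} \left( 2 \beta \left(\beta \delta^2 + \frac{e^2}{n - \beta}\right) - e^2 - 2 \beta (n - \beta) \Delta^2\right).$$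
   Context: Graphs are finite, undirected, without loops or multiple edges. $d(u)$ denotes the degree of vertex $u$; $\delta$ and $\Delta$ are the minimum and maximum degrees. The independence number $\beta$ is the maximum size of a set of pairwise nonadjacent vertices. The first Zagreb index is $Z_1(G)=\sum_{u\in V} d(u)^2$, the forgotten topological index is $F(G)=\sum_{u\in V} d(u)^3$, and (when $\delta\ge 1$) the inverse degree is $Inv(G)=\sum_{u\in V}\frac{1}{d(u)}$. A regular balanced bipartite graph is a bipartite graph whose two parts have equal size and in which all vertices have the same degree. *)

theory Defs
  imports Main "HOL-Library.Disjoint_Sets" Complex_Main
begin

definition simple_graph :: "'a set \<Rightarrow> 'a set set \<Rightarrow> bool" where
  "simple_graph V E \<longleftrightarrow> finite V \<and> (\<forall>x\<in>E. x \<subseteq> V \<and> card x = 2)"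

definition degree :: "'a set set \<Rightarrow> 'a \<Rightarrow> nat" where
  "degree E u = card {x\<in>E. u \<in> x}"

definition min_degree :: "'a set \<Rightarrow> 'a set set \<Rightarrow> nat" where
  "min_degree V E = Min (degree E ` V)"

definition max_degree :: "'a set \<Rightarrow> 'a set set \<Rightarrow> nat" where
  "max_degree V E = Max (degree E ` V)"

definition independent_set :: "'a set \<Rightarrow> 'a set set \<Rightarrow> 'a set \<Rightarrow> bool" where
  "independent_set V E S \<longleftrightarrow> S \<subseteq> V \<and> (\<forall>u\<in>S. \<forall>v\<in>S. {u, v} \<notin> E)"

definition independence_number :: "'a set \<Rightarrow> 'a set set \<Rightarrow> nat" where
  "independence_number V E = Max (card ` {S. independent_set V E S})"

definition zagreb1 :: "'a set \<Rightarrow> 'a set set \<Rightarrow> nat" where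
  "zagreb1 V E = (\<Sum>u\<in>V. degree E u ^ 2)"

definition forgotten_index :: "'a set \<Rightarrow> 'a set set \<Rightarrow> nat" where
  "forgotten_index V E = (\<Sum>u\<in>V. degree E u ^ 3)"

definition inverse_degree :: "'a set \<Rightarrow> 'a set set \<Rightarrow> real" where
  "inverse_degree V E = (\<Sum>u\<in>V. 1 / real (degree E u))"

definition regular_balanced_bipartite :: "'a set \<Rightarrow> 'a set set \<Rightarrow> bool" where
  "regular_balanced_bipartite V E \<longleftrightarrow>
     (\<exists>A B. A \<union> B = V \<and> A \<inter> B = {} \<and> card A = card B \<and>
            (\<forall>x\<in>E. \<exists>a\<in>A. \<exists>b\<in>B. x = {a, b})) \<and>
     (\<exists>k. \<forall>u\<in>V. degree E u = k)"

end

theory Submission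
  imports Defs
begin

lemma deg_sum:
  assumes "finite A" "finite E"
  shows "(\<Sum>u\<in>A. degree E u) = (\<Sum>x\<in>E. card (x \<inter> A))"
proof -
  have "(\<Sum>u\<in>A. degree E u) = (\<Sum>u\<in>A. \<Sum>x\<in>E. (of_bool (u \<in> x) :: nat))"
    unfolding degree_def using assms
    by (intro sum.cong refl) (simp add: sum_of_bool_eq Int_def conj_commute)
  also have "\<dots> = (\<Sum>x\<in>E. \<Sum>u\<in>A. (of_bool (u \<in> x) :: nat))" by (rule sum.swap)
  also have "\<dots> = (\<Sum>x\<in>E. card (x \<inter> A))" using assms
    by (intro sum.cong refl) (simp add: sum_of_bool_eq Int_commute)
  finally show ?thesis .
qed

lemma handshake:
  assumes "simple_graph V E"
  shows "(\<Sum>u\<in>V. degree E u) = 2 * card E" "finite E"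
proof -
  have fV: "finite V" using assms by (simp add: simple_graph_def)
  show fE: "finite E" using assms fV unfolding simple_graph_def
    by (meson Pow_iff finite_Pow_iff rev_finite_subset subsetI)
  have "(\<Sum>u\<in>V. degree E u) = (\<Sum>x\<in>E. card (x \<inter> V))" by (rule deg_sum[OF fV fE])
  also have "\<dots> = (\<Sum>x\<in>E. 2)" using assms unfolding simple_graph_def
    by (intro sum.cong refl) (simp add: Int_absorb2)
  finally show "(\<Sum>u\<in>V. degree E u) = 2 * card E" by simp
qed

lemma edge_S_le1:
  assumes "simple_graph V E" "independent_set V E S" "x \<in> E"
  shows "card (x \<inter> S) \<le> 1"
proof -
  obtain a b where ab: "x = {a,b}" "a \<noteq> b" using assms(1,3) unfolding simple_graph_def
    by (meson card_2_iff)
  have "\<not> (a \<in> S \<and> b \<in> S)" using assms(2,3) ab unfolding independent_set_def by blast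
  then have "x \<inter> S \<subseteq> {a} \<or> x \<inter> S \<subseteq> {b}" using ab by blast
  then show "card (x \<inter> S) \<le> 1"
    by (metis card.empty card.insert card_mono empty_iff finite.emptyI finite.insertI One_nat_def)
qed

lemma max_indep:
  assumes "simple_graph V E" "V \<noteq> {}"
  obtains S where "independent_set V E S" "card S = independence_number V E" "card S \<ge> 1"
proof -
  have fV: "finite V" using assms by (simp add: simple_graph_def)
  have fin: "finite (card ` {S. independent_set V E S})"
    using fV unfolding independent_set_def by simp
  obtain v where v: "v \<in> V" using assms(2) by blast
  have iv: "independent_set V E {v}" using v assms(1) unfolding independent_set_def simple_graph_def
    by auto
  have ne: "card ` {S. independent_set V E S} \<noteq> {}" using iv by blast
  have "independence_number V E \<in> card ` {S. independent_set V E S}"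
    unfolding independence_number_def using fin ne by (rule Max_in)
  then obtain S where S: "independent_set V E S" "card S = independence_number V E" by auto
  have "card {v} \<in> card ` {S. independent_set V E S}" using iv by blast
  then have "card {v} \<le> independence_number V E"
    unfolding independence_number_def using fin by (intro Max_ge) auto
  then show ?thesis using that S by simp
qed
lemma arith_core:
  fixes n \<beta> e \<delta> \<Delta> s Z F I :: real
  assumes d1: "1 \<le> \<delta>" and dD: "\<delta> \<le> \<Delta>" and b1: "1 \<le> \<beta>"
    and bs: "\<beta> * \<delta> \<le> s" and se: "s \<le> e" and T: "2 * e - s \<le> (n - \<beta>) * \<Delta>"
    and hZ: "Z \<le> (n - \<beta>) * \<Delta>^2 + \<Delta> * s"
    and hF: "F \<ge> n * \<delta>^3" "F = n * \<delta>^3 \<Longrightarrow> \<delta> = \<Delta>"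
    and hI: "I \<ge> n / \<Delta>" "I = n / \<Delta> \<Longrightarrow> \<delta> = \<Delta>"
    and hreg: "\<delta> = \<Delta> \<Longrightarrow> Z = n * \<delta>^2 \<and> F = n * \<delta>^3 \<and> I = n / \<delta> \<and> 2 * e - s = (n - \<beta>) * \<delta>"
    and PR: "P \<longleftrightarrow> (\<delta> = \<Delta> \<and> s = e \<and> e = \<beta> * \<delta>)"
  shows
   "(Z \<le> (n - \<beta>) * \<Delta>^2 + e^2 / (2 * \<beta>) + \<beta> * \<Delta>^3 / (2 * \<delta>) \<and>
     (Z = (n - \<beta>) * \<Delta>^2 + e^2 / (2 * \<beta>) + \<beta> * \<Delta>^3 / (2 * \<delta>) \<longleftrightarrow> P))
  \<and> (F \<ge> (n - \<beta>) * \<delta>^3 + \<delta> * (2 * \<beta>^2 * \<delta>^2 - e^2) / \<beta> \<and>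
     (F = (n - \<beta>) * \<delta>^3 + \<delta> * (2 * \<beta>^2 * \<delta>^2 - e^2) / \<beta> \<longleftrightarrow> P))
  \<and> (F \<ge> (n - \<beta>) * \<delta>^3 + (\<delta> / \<beta>) * (2 * \<beta> * (\<beta> * \<delta>^2 + e^2 / (n - \<beta>)) - e^2
                                    - 2 * \<beta> * (n - \<beta>) * \<Delta>^2) \<and>
     (F = (n - \<beta>) * \<delta>^3 + (\<delta> / \<beta>) * (2 * \<beta> * (\<beta> * \<delta>^2 + e^2 / (n - \<beta>)) - e^2
                                    - 2 * \<beta> * (n - \<beta>) * \<Delta>^2) \<longleftrightarrow> P))
  \<and> (I \<ge> (n - \<beta>) / \<Delta> + (2 * \<beta>^2 * \<delta>^2 - e^2) / (\<beta> * \<Delta>^3) \<and>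
     (I = (n - \<beta>) / \<Delta> + (2 * \<beta>^2 * \<delta>^2 - e^2) / (\<beta> * \<Delta>^3) \<longleftrightarrow> P))
  \<and> (I \<ge> (n - \<beta>) / \<Delta> + (1 / (\<beta> * \<Delta>^3)) * (2 * \<beta> * (\<beta> * \<delta>^2 + e^2 / (n - \<beta>)) - e^2
                                    - 2 * \<beta> * (n - \<beta>) * \<Delta>^2) \<and>
     (I = (n - \<beta>) / \<Delta> + (1 / (\<beta> * \<Delta>^3)) * (2 * \<beta> * (\<beta> * \<delta>^2 + e^2 / (n - \<beta>)) - e^2
                                    - 2 * \<beta> * (n - \<beta>) * \<Delta>^2) \<longleftrightarrow> P))"
proof -
  have D1: "1 \<le> \<Delta>" using d1 dD by linarith
  have e0: "\<beta> * \<delta> \<le> e" using bs se by linarith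
  have bd1: "1 \<le> \<beta> * \<delta>" using b1 d1 by (metis mult_mono' mult_1 zero_le_one order_trans)
  have eT: "e \<le> (n - \<beta>) * \<Delta>" using T se by linarith
  have nb: "n - \<beta> > 0"
  proof (rule ccontr)
    assume "\<not> n - \<beta> > 0"
    then have "(n - \<beta>) * \<Delta> \<le> 0" using D1 by (simp add: mult_nonpos_nonneg)
    then show False using eT e0 bd1 by linarith
  qed
  have ee: "\<beta>^2 * \<delta>^2 \<le> e^2"
  proof -
    have "(\<beta> * \<delta>)^2 \<le> e^2" using e0 bd1 by (intro power_mono) auto
    then show ?thesis by (simp add: power_mult_distrib)
  qed
  have Pfacts: "\<delta> = \<Delta> \<and> s = e \<and> e = \<beta> * \<delta> \<and> n = 2 * \<beta> \<and> Z = n * \<delta>^2 \<and> F = n * \<delta>^3 \<and> I = n / \<delta>"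
    if P
  proof -
    have a: "\<delta> = \<Delta>" "s = e" "e = \<beta> * \<delta>" using that PR by auto
    have r: "Z = n * \<delta>^2 \<and> F = n * \<delta>^3 \<and> I = n / \<delta> \<and> 2 * e - s = (n - \<beta>) * \<delta>"
      using hreg a(1) by blast
    have "\<beta> * \<delta> = (n - \<beta>) * \<delta>" using r a by linarith
    then have "\<beta> = n - \<beta>" using d1 by simp
    then show ?thesis using a r by auto
  qed
  have gap: "e^2 / (n - \<beta>) \<le> (n - \<beta>) * \<Delta>^2"
  proof -
    have "e^2 \<le> ((n - \<beta>) * \<Delta>)^2" using eT e0 bd1 by (intro power_mono) auto
    then have "e^2 \<le> (n - \<beta>) * ((n - \<beta>) * \<Delta>^2)" by (simp add: power2_eq_square algebra_simps)
    then show ?thesis using nb by (simp add: divide_le_eq mult.commute)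
  qed
  have gapP: "e^2 / (n - \<beta>) = (n - \<beta>) * \<Delta>^2" if P
  proof -
    from Pfacts[OF that] have "e = (n - \<beta>) * \<Delta>" by auto
    then show ?thesis using nb by (simp add: power2_eq_square)
  qed
  define R1 where "R1 = (n - \<beta>) * \<Delta>^2 + e^2 / (2 * \<beta>) + \<beta> * \<Delta>^3 / (2 * \<delta>)"
  have R1eq: "R1 - ((n - \<beta>) * \<Delta>^2 + \<Delta> * s)
      = \<Delta> * (e - s) + (e - \<beta> * \<Delta>)^2 / (2 * \<beta>) + \<beta> * \<Delta>^2 * (\<Delta> - \<delta>) / (2 * \<delta>)"
    unfolding R1_def using b1 d1 by (simp add: field_simps power2_eq_square power3_eq_cube)
  have t1: "\<Delta> * (e - s) \<ge> 0" using D1 se by simp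
  have t2: "(e - \<beta> * \<Delta>)^2 / (2 * \<beta>) \<ge> 0" using b1 by simp
  have t3: "\<beta> * \<Delta>^2 * (\<Delta> - \<delta>) / (2 * \<delta>) \<ge> 0" using b1 d1 dD by simp
  have p1a: "Z \<le> R1" using R1eq t1 t2 t3 hZ by linarith
  have p1b: "Z = R1 \<longleftrightarrow> P"
  proof
    assume "Z = R1"
    then have "\<Delta> * (e - s) + (e - \<beta> * \<Delta>)^2 / (2 * \<beta>) + \<beta> * \<Delta>^2 * (\<Delta> - \<delta>) / (2 * \<delta>) \<le> 0"
      using R1eq hZ by linarith
    then have z1: "\<Delta> * (e - s) = 0" and z2: "(e - \<beta> * \<Delta>)^2 / (2 * \<beta>) = 0"
      and z3: "\<beta> * \<Delta>^2 * (\<Delta> - \<delta>) / (2 * \<delta>) = 0" using t1 t2 t3 by linarith+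
    have "s = e" using z1 D1 by simp
    moreover have "e = \<beta> * \<Delta>" using z2 b1 by simp
    moreover have "\<Delta> = \<delta>" using z3 b1 d1 D1 by simp
    ultimately show P using PR by simp
  next
    assume P
    note f = Pfacts[OF this]
    show "Z = R1" unfolding R1_def using f b1 d1
      by (elim conjE) (simp add: field_simps power2_eq_square power3_eq_cube)
  qed
  define R2 where "R2 = (n - \<beta>) * \<delta>^3 + \<delta> * (2 * \<beta>^2 * \<delta>^2 - e^2) / \<beta>"
  have R2eq: "n * \<delta>^3 - R2 = \<delta> * (e^2 - \<beta>^2 * \<delta>^2) / \<beta>"
    unfolding R2_def using b1 by (simp add: field_simps power2_eq_square power3_eq_cube)
  have u2: "\<delta> * (e^2 - \<beta>^2 * \<delta>^2) / \<beta> \<ge> 0" using ee b1 d1 by simp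
  have p2a: "F \<ge> R2" using R2eq u2 hF(1) by linarith
  have p2b: "F = R2 \<longleftrightarrow> P"
  proof
    assume "F = R2"
    then have F1: "F = n * \<delta>^3" and z: "\<delta> * (e^2 - \<beta>^2 * \<delta>^2) / \<beta> = 0"
      using R2eq u2 hF(1) by linarith+
    have dd: "\<delta> = \<Delta>" using hF(2)[OF F1] .
    have "e^2 = (\<beta> * \<delta>)^2" using z b1 d1 by (simp add: power_mult_distrib)
    then have "e = \<beta> * \<delta>" using e0 bd1 by (simp add: power2_eq_iff_nonneg)
    then show P using PR dd bs se by auto
  next
    assume P
    note f = Pfacts[OF this]
    show "F = R2" unfolding R2_def using f b1 d1
      by (elim conjE) (simp add: field_simps power2_eq_square power3_eq_cube)
  qed
  define R3 where "R3 = (n - \<beta>) * \<delta>^3 + (\<delta> / \<beta>) * (2 * \<beta> * (\<beta> * \<delta>^2 + e^2 / (n - \<beta>)) - e^2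
                                    - 2 * \<beta> * (n - \<beta>) * \<Delta>^2)"
  have R3eq: "R3 = R2 + 2 * \<delta> * (e^2 / (n - \<beta>) - (n - \<beta>) * \<Delta>^2)"
    unfolding R3_def R2_def using b1 by (simp add: field_simps power2_eq_square)
  have u3: "2 * \<delta> * (e^2 / (n - \<beta>) - (n - \<beta>) * \<Delta>^2) \<le> 0"
    using gap d1 by (simp add: mult_nonneg_nonpos)
  have p3a: "F \<ge> R3" using R3eq u3 p2a by linarith
  have p3b: "F = R3 \<longleftrightarrow> P"
  proof
    assume "F = R3"
    then have "F = R2" using R3eq u3 p2a by linarith
    then show P using p2b by simp
  next
    assume P
    then show "F = R3" using R3eq gapP p2b by simp
  qed
  define R4 where "R4 = (n - \<beta>) / \<Delta> + (2 * \<beta>^2 * \<delta>^2 - e^2) / (\<beta> * \<Delta>^3)"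
  have R4eq: "n / \<Delta> - R4 = (\<beta>^2 * \<Delta>^2 - 2 * \<beta>^2 * \<delta>^2 + e^2) / (\<beta> * \<Delta>^3)"
    unfolding R4_def using b1 D1 by (simp add: field_simps power2_eq_square power3_eq_cube)
  have dd2: "\<delta>^2 \<le> \<Delta>^2" using dD d1 by (intro power_mono) auto
  have w0: "\<beta>^2 * \<delta>^2 \<le> \<beta>^2 * \<Delta>^2" using dd2 by (simp add: mult_left_mono)
  have u4: "(\<beta>^2 * \<Delta>^2 - 2 * \<beta>^2 * \<delta>^2 + e^2) / (\<beta> * \<Delta>^3) \<ge> 0"
  proof -
    have "0 \<le> \<beta>^2 * \<Delta>^2 - 2 * \<beta>^2 * \<delta>^2 + e^2" using ee w0 by linarith
    then show ?thesis using b1 D1 by (intro divide_nonneg_pos) auto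
  qed
  have p4a: "I \<ge> R4" using R4eq u4 hI(1) by linarith
  have p4b: "I = R4 \<longleftrightarrow> P"
  proof
    assume "I = R4"
    then have I1: "I = n / \<Delta>" and z: "(\<beta>^2 * \<Delta>^2 - 2 * \<beta>^2 * \<delta>^2 + e^2) / (\<beta> * \<Delta>^3) = 0"
      using R4eq u4 hI(1) by linarith+
    have dd: "\<delta> = \<Delta>" using hI(2)[OF I1] .
    have "\<beta>^2 * \<Delta>^2 - 2 * \<beta>^2 * \<delta>^2 + e^2 = 0" using z b1 D1 by simp
    then have "e^2 = (\<beta> * \<delta>)^2" using dd by (simp add: power_mult_distrib)
    then have "e = \<beta> * \<delta>" using e0 bd1 by (simp add: power2_eq_iff_nonneg)
    then show P using PR dd bs se by auto
  next
    assume P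
    note f = Pfacts[OF this]
    show "I = R4" unfolding R4_def using f b1 d1
      by (elim conjE) (simp add: field_simps power2_eq_square power3_eq_cube)
  qed
  define R5 where "R5 = (n - \<beta>) / \<Delta> + (1 / (\<beta> * \<Delta>^3)) * (2 * \<beta> * (\<beta> * \<delta>^2 + e^2 / (n - \<beta>)) - e^2
                                    - 2 * \<beta> * (n - \<beta>) * \<Delta>^2)"
  have R5eq: "R5 = R4 + 2 * (e^2 / (n - \<beta>) - (n - \<beta>) * \<Delta>^2) / \<Delta>^3"
    unfolding R5_def R4_def using b1 D1 by (simp add: field_simps power2_eq_square)
  have u5: "2 * (e^2 / (n - \<beta>) - (n - \<beta>) * \<Delta>^2) / \<Delta>^3 \<le> 0"
    using gap D1 by (intro divide_nonpos_pos) auto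
  have p5a: "I \<ge> R5" using R5eq u5 p4a by linarith
  have p5b: "I = R5 \<longleftrightarrow> P"
  proof
    assume "I = R5"
    then have "I = R4" using R5eq u5 p4a by linarith
    then show P using p4b by simp
  next
    assume P
    then show "I = R5" using R5eq gapP p4b by simp
  qed
  show ?thesis
    using p1a p1b p2a p2b p3a p3b p4a p4b p5a p5b
    unfolding R1_def R2_def R3_def R4_def R5_def by blast
qed

theorem theorem1:
  fixes V :: "'a set" and E :: "'a set set"
  assumes G: "simple_graph V E" and ne: "V \<noteq> {}"
    and dpos: "min_degree V E \<ge> 1"
  defines "n \<equiv> real (card V)" and "e \<equiv> real (card E)"
    and "\<delta> \<equiv> real (min_degree V E)" and "\<Delta> \<equiv> real (max_degree V E)"
    and "\<beta> \<equiv> real (independence_number V E)"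
    and "Z \<equiv> real (zagreb1 V E)" and "F \<equiv> real (forgotten_index V E)"
    and "I \<equiv> inverse_degree V E"
    and "R \<equiv> regular_balanced_bipartite V E"
  shows
   "(Z \<le> (n - \<beta>) * \<Delta>^2 + e^2 / (2 * \<beta>) + \<beta> * \<Delta>^3 / (2 * \<delta>) \<and>
     (Z = (n - \<beta>) * \<Delta>^2 + e^2 / (2 * \<beta>) + \<beta> * \<Delta>^3 / (2 * \<delta>) \<longleftrightarrow> R))
  \<and> (F \<ge> (n - \<beta>) * \<delta>^3 + \<delta> * (2 * \<beta>^2 * \<delta>^2 - e^2) / \<beta> \<and>
     (F = (n - \<beta>) * \<delta>^3 + \<delta> * (2 * \<beta>^2 * \<delta>^2 - e^2) / \<beta> \<longleftrightarrow> R))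
  \<and> (F \<ge> (n - \<beta>) * \<delta>^3 + (\<delta> / \<beta>) * (2 * \<beta> * (\<beta> * \<delta>^2 + e^2 / (n - \<beta>)) - e^2
                                    - 2 * \<beta> * (n - \<beta>) * \<Delta>^2) \<and>
     (F = (n - \<beta>) * \<delta>^3 + (\<delta> / \<beta>) * (2 * \<beta> * (\<beta> * \<delta>^2 + e^2 / (n - \<beta>)) - e^2
                                    - 2 * \<beta> * (n - \<beta>) * \<Delta>^2) \<longleftrightarrow> R))
  \<and> (I \<ge> (n - \<beta>) / \<Delta> + (2 * \<beta>^2 * \<delta>^2 - e^2) / (\<beta> * \<Delta>^3) \<and>
     (I = (n - \<beta>) / \<Delta> + (2 * \<beta>^2 * \<delta>^2 - e^2) / (\<beta> * \<Delta>^3) \<longleftrightarrow> R))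
  \<and> (I \<ge> (n - \<beta>) / \<Delta> + (1 / (\<beta> * \<Delta>^3)) * (2 * \<beta> * (\<beta> * \<delta>^2 + e^2 / (n - \<beta>)) - e^2
                                    - 2 * \<beta> * (n - \<beta>) * \<Delta>^2) \<and>
     (I = (n - \<beta>) / \<Delta> + (1 / (\<beta> * \<Delta>^3)) * (2 * \<beta> * (\<beta> * \<delta>^2 + e^2 / (n - \<beta>)) - e^2
                                    - 2 * \<beta> * (n - \<beta>) * \<Delta>^2) \<longleftrightarrow> R))"
proof -
  define d where "d u = real (degree E u)" for u
  have fV: "finite V" using G by (simp add: simple_graph_def)
  have fE: "finite E" by (rule handshake(2)[OF G])
  have hs: "(\<Sum>u\<in>V. d u) = 2 * e"
    unfolding d_def e_def using handshake(1)[OF G] by (metis of_nat_sum of_nat_mult of_nat_numeral)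
  have fD: "finite (degree E ` V)" "degree E ` V \<noteq> {}" using fV ne by auto
  have dlo: "\<delta> \<le> d u" if "u \<in> V" for u
    unfolding d_def \<delta>_def min_degree_def using fD that by simp
  have dhi: "d u \<le> \<Delta>" if "u \<in> V" for u
    unfolding d_def \<Delta>_def max_degree_def using fD that by simp
  obtain umax where umax: "umax \<in> V" "d umax = \<Delta>"
    using Max_in[OF fD] unfolding d_def \<Delta>_def max_degree_def by auto
  obtain umin where umin: "umin \<in> V" "d umin = \<delta>"
    using Min_in[OF fD] unfolding d_def \<delta>_def min_degree_def by auto
  have d1: "1 \<le> \<delta>" using dpos unfolding \<delta>_def by simp
  have dD: "\<delta> \<le> \<Delta>" using dlo dhi umax by force
  have dpos': "d u > 0" if "u \<in> V" for u using dlo[OF that] d1 by linarith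
  obtain S where S: "independent_set V E S" "card S = independence_number V E" "card S \<ge> 1"
    using max_indep[OF G ne] by blast
  have SV: "S \<subseteq> V" using S(1) unfolding independent_set_def by simp
  have fS: "finite S" using SV fV by (rule rev_finite_subset[rotated])
  define s where "s = (\<Sum>u\<in>S. d u)"
  have b1: "1 \<le> \<beta>" using S unfolding \<beta>_def by simp
  have cS: "real (card S) = \<beta>" using S unfolding \<beta>_def by simp
  have cT: "real (card (V - S)) = n - \<beta>" using SV fS cS card_mono[OF fV SV] unfolding n_def
    by (simp add: card_Diff_subset card_mono of_nat_diff)
  have snat: "s = real (\<Sum>x\<in>E. card (x \<inter> S))"
    unfolding s_def d_def using deg_sum[OF fS fE] by (metis of_nat_sum)
  have se: "s \<le> e"
  proof -
    have "(\<Sum>x\<in>E. card (x \<inter> S)) \<le> (\<Sum>x\<in>E. 1)"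
      by (rule sum_mono) (rule edge_S_le1[OF G S(1)])
    then show ?thesis unfolding snat e_def by (simp only: of_nat_le_iff) simp
  qed
  have bs: "\<beta> * \<delta> \<le> s"
  proof -
    have "(\<Sum>u\<in>S. \<delta>) \<le> s" unfolding s_def using SV dlo by (intro sum_mono) auto
    then show ?thesis using cS by simp
  qed
  have split: "(\<Sum>u\<in>V. f u) = (\<Sum>u\<in>S. f u) + (\<Sum>u\<in>V - S. f u)" for f :: "'a \<Rightarrow> real"
    using sum.subset_diff[OF SV fV] by (simp add: add.commute)
  have sT: "(\<Sum>u\<in>V - S. d u) = 2 * e - s" using split[of d] hs unfolding s_def by simp
  have T: "2 * e - s \<le> (n - \<beta>) * \<Delta>"
  proof -
    have "(\<Sum>u\<in>V - S. d u) \<le> (\<Sum>u\<in>V - S. \<Delta>)" using dhi by (intro sum_mono) auto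
    then show ?thesis using sT cT by (simp add: mult.commute)
  qed
  have Zd: "Z = (\<Sum>u\<in>V. d u ^ 2)" unfolding Z_def zagreb1_def d_def by simp
  have Fd: "F = (\<Sum>u\<in>V. d u ^ 3)" unfolding F_def forgotten_index_def d_def by simp
  have Id: "I = (\<Sum>u\<in>V. 1 / d u)" unfolding I_def inverse_degree_def d_def by simp
  have hZ: "Z \<le> (n - \<beta>) * \<Delta>^2 + \<Delta> * s"
  proof -
    have a: "(\<Sum>u\<in>V - S. d u ^ 2) \<le> (\<Sum>u\<in>V - S. \<Delta>^2)"
      using dhi dpos' by (intro sum_mono power_mono) (auto intro: less_imp_le)
    have b: "(\<Sum>u\<in>S. d u ^ 2) \<le> (\<Sum>u\<in>S. \<Delta> * d u)"
    proof (rule sum_mono)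
      fix u assume "u \<in> S"
      then have "u \<in> V" using SV by auto
      then show "d u ^ 2 \<le> \<Delta> * d u" using dhi dpos' by (simp add: power2_eq_square mult_right_mono less_imp_le)
    qed
    have "(\<Sum>u\<in>S. \<Delta> * d u) = \<Delta> * s" unfolding s_def by (simp add: sum_distrib_left)
    then show ?thesis using a b cT Zd split[of "\<lambda>u. d u ^ 2"] by (simp add: mult.commute)
  qed
  have hF1: "F \<ge> n * \<delta>^3"
  proof -
    have "(\<Sum>u\<in>V. \<delta>^3) \<le> (\<Sum>u\<in>V. d u ^ 3)" using dlo d1 by (intro sum_mono power_mono) auto
    then show ?thesis using Fd unfolding n_def by simp
  qed
  have hF2: "\<delta> = \<Delta>" if "F = n * \<delta>^3"
  proof -
    have "0 \<le> d u ^ 3 - \<delta>^3" if "u \<in> V" for u using dlo[OF that] d1 by (simp add: power_mono)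
    then have "d umax ^ 3 - \<delta>^3 \<le> (\<Sum>u\<in>V. d u ^ 3 - \<delta>^3)"
      using umax fV by (intro member_le_sum) auto
    also have "\<dots> = F - n * \<delta>^3" using Fd unfolding n_def by (simp add: sum_subtractf)
    finally have D3: "\<Delta>^3 \<le> \<delta>^3" using that umax by simp
    have "\<not> \<delta> < \<Delta>"
    proof
      assume "\<delta> < \<Delta>"
      then have "\<delta>^3 < \<Delta>^3" using d1 by (intro power_strict_mono) auto
      then show False using D3 by linarith
    qed
    then have "\<Delta> \<le> \<delta>" by simp
    then show ?thesis using dD by simp
  qed
  have invle: "1 / \<Delta> \<le> 1 / d u" if "u \<in> V" for u
    using le_imp_inverse_le[OF dhi[OF that] dpos'[OF that]] by (simp add: inverse_eq_divide)
  have hI1: "I \<ge> n / \<Delta>"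
  proof -
    have "(\<Sum>u\<in>V. 1 / \<Delta>) \<le> (\<Sum>u\<in>V. 1 / d u)" using invle by (intro sum_mono) auto
    then show ?thesis using Id unfolding n_def by simp
  qed
  have hI2: "\<delta> = \<Delta>" if "I = n / \<Delta>"
  proof -
    have "0 \<le> 1 / d u - 1 / \<Delta>" if "u \<in> V" for u using invle[OF that] by simp
    then have "1 / d umin - 1 / \<Delta> \<le> (\<Sum>u\<in>V. 1 / d u - 1 / \<Delta>)"
      using umin fV by (intro member_le_sum) auto
    also have "\<dots> = I - n / \<Delta>" using Id unfolding n_def by (simp add: sum_subtractf)
    finally have "1 / \<delta> \<le> 1 / \<Delta>" using that umin by simp
    then have "inverse \<delta> \<le> inverse \<Delta>" by (simp add: inverse_eq_divide)
    then have "\<Delta> \<le> \<delta>" using d1 dD by (subst (asm) inverse_le_iff_le) auto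
    then show ?thesis using dD by simp
  qed
  have allreg: "d u = \<delta>" if "\<delta> = \<Delta>" "u \<in> V" for u using dlo dhi that by force
  have hreg: "Z = n * \<delta>^2 \<and> F = n * \<delta>^3 \<and> I = n / \<delta> \<and> 2 * e - s = (n - \<beta>) * \<delta>"
    if "\<delta> = \<Delta>"
  proof -
    have a: "Z = n * \<delta>^2" using Zd allreg[OF that] unfolding n_def by simp
    have b: "F = n * \<delta>^3" using Fd allreg[OF that] unfolding n_def by simp
    have c: "I = n / \<delta>" using Id allreg[OF that] unfolding n_def by simp
    have "(\<Sum>u\<in>V - S. d u) = (\<Sum>u\<in>V - S. \<delta>)" using allreg[OF that] by simp
    then have "2 * e - s = (n - \<beta>) * \<delta>" using sT cT by simp
    then show ?thesis using a b c by simp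
  qed
  have PR: "R \<longleftrightarrow> (\<delta> = \<Delta> \<and> s = e \<and> e = \<beta> * \<delta>)"
  proof
    assume R
    then obtain A B k where AB: "A \<union> B = V" "A \<inter> B = {}" "card A = card B"
        "\<forall>x\<in>E. \<exists>a\<in>A. \<exists>b\<in>B. x = {a, b}" and k: "\<forall>u\<in>V. degree E u = k"
      unfolding R_def regular_balanced_bipartite_def by blast
    have dk: "d u = real k" if "u \<in> V" for u using k that unfolding d_def by simp
    have dd: "\<delta> = \<Delta>" using dk umax umin by simp
    have fA: "finite A" "finite B" using AB(1) fV by (metis finite_Un)+
    have nA: "n = 2 * real (card A)" unfolding n_def
      using card_Un_disjoint[OF fA AB(2)] AB(1,3) by simp
    have iA: "independent_set V E A" unfolding independent_set_def
    proof (intro conjI ballI)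
      show "A \<subseteq> V" using AB(1) by blast
      fix u v assume uv: "u \<in> A" "v \<in> A"
      show "{u, v} \<notin> E"
      proof
        assume "{u, v} \<in> E"
        then obtain a b where "a \<in> A" "b \<in> B" "{u, v} = {a, b}" using AB(4) by blast
        then have "b \<in> A \<inter> B" using uv by (metis IntI doubleton_eq_iff)
        then show False using AB(2) by simp
      qed
    qed
    have fin: "finite (card ` {S. independent_set V E S})"
      using fV unfolding independent_set_def by simp
    have "card A \<in> card ` {S. independent_set V E S}" using iA by blast
    then have "card A \<le> independence_number V E"
      unfolding independence_number_def using fin by (intro Max_ge) auto
    then have Ab: "real (card A) \<le> \<beta>" unfolding \<beta>_def by simp
    have "(\<Sum>u\<in>V. d u) = n * real k" using dk unfolding n_def by simp
    moreover have "real k = \<delta>" using dk umin by simp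
    ultimately have "2 * e = n * \<delta>" using hs by simp
    then have "e = real (card A) * \<delta>" using nA by simp
    then have "e \<le> \<beta> * \<delta>" using Ab d1 by (simp add: mult_right_mono)
    then show "\<delta> = \<Delta> \<and> s = e \<and> e = \<beta> * \<delta>" using dd bs se by simp
  next
    assume P: "\<delta> = \<Delta> \<and> s = e \<and> e = \<beta> * \<delta>"
    have "2 * e - s = (n - \<beta>) * \<delta>" using hreg P by blast
    then have "(n - \<beta>) * \<delta> = \<beta> * \<delta>" using P by linarith
    then have "n - \<beta> = \<beta>" using d1 by simp
    then have cAB: "card S = card (V - S)" using cT cS by simp
    have one: "card (x \<inter> S) = 1" if x: "x \<in> E" for x
    proof (rule ccontr)
      assume "card (x \<inter> S) \<noteq> 1"
      then have "card (x \<inter> S) < 1" using edge_S_le1[OF G S(1) x] by simp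
      then have "(\<Sum>x\<in>E. card (x \<inter> S)) < (\<Sum>x\<in>E. 1)"
        using x fE edge_S_le1[OF G S(1)] by (intro sum_strict_mono_ex1) auto
      then have "s < e" unfolding snat e_def by (simp only: of_nat_less_iff) simp
      then show False using P by simp
    qed
    have edges: "\<exists>a\<in>S. \<exists>b\<in>V - S. x = {a, b}" if x: "x \<in> E" for x
    proof -
      obtain a b where ab: "x = {a,b}" "a \<noteq> b" using G x unfolding simple_graph_def
        by (meson card_2_iff)
      have xV: "x \<subseteq> V" using G x unfolding simple_graph_def by blast
      obtain c where c: "x \<inter> S = {c}" using one[OF x] by (rule card_1_singletonE)
      show ?thesis
      proof (cases "c = a")
        case True
        then have "a \<in> S" "b \<notin> S" using c ab by auto
        then show ?thesis using ab xV by blast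
      next
        case False
        then have "c = b" using c ab by blast
        then have "b \<in> S" "a \<notin> S" using c ab False by blast+
        then show ?thesis using ab xV by (metis Diff_iff insert_commute insert_subset)
      qed
    qed
    have reg: "\<forall>u\<in>V. degree E u = degree E umin"
    proof
      fix u assume "u \<in> V"
      then have "d u = d umin" using allreg P umin by simp
      then show "degree E u = degree E umin" unfolding d_def by simp
    qed
    have "S \<union> (V - S) = V" "S \<inter> (V - S) = {}" using SV by auto
    then have "\<exists>A B. A \<union> B = V \<and> A \<inter> B = {} \<and> card A = card B \<and>
            (\<forall>x\<in>E. \<exists>a\<in>A. \<exists>b\<in>B. x = {a, b})"
      using cAB edges by (intro exI[of _ S] exI[of _ "V - S"]) simp
    moreover have "\<exists>k. \<forall>u\<in>V. degree E u = k" using reg by (intro exI)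
    ultimately show R unfolding R_def regular_balanced_bipartite_def by blast
  qed
  show ?thesis
    by (rule arith_core[OF d1 dD b1 bs se T hZ hF1 hF2 hI1 hI2 hreg PR])
qed

end
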